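(* Let $Q$ be a finite set, let $M\subseteq Q^5$ be an MDS code with code distance $4$, and let $M'\subseteq Q^4$ be a projection of $M$ in some direction $i\in\{1,\dots,5\}$. Then there exists an MDS code $C\subseteq Q^4$ with code distance $2$ such that $M'\subseteq C$.
   Context: A subset $C\subseteq Q^d$ is an MDS code with code distance $\varrho$ if $|C\cap\Gamma|=1$ for every $(\varrho-1)$-dimensional axis-aligned plane $\Gamma\subseteq Q^d$ (the set obtained by fixing some $d-\varrho+1$ coordinates and letting the other $\varrho-1$ range over $Q$). The projection of $C\subseteq Q^d$ in the $i$th direction is $C_i=\{(x_1,\dots,x_{i-1},x_{i+1},\dots,x_d)\mid \exists x_i: (x_1,\dots,x_d)\in C\}\subseteq Q^{d-1}$. *)

theory Defs
  imports Main
begin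

definition cube :: "'a set \<Rightarrow> nat \<Rightarrow> 'a list set" where
  "cube Q d = {x. length x = d \<and> set x \<subseteq> Q}"

definition axis_plane :: "'a set \<Rightarrow> nat \<Rightarrow> nat set \<Rightarrow> (nat \<Rightarrow> 'a) \<Rightarrow> 'a list set" where
  "axis_plane Q d S v = {x \<in> cube Q d. \<forall>i\<in>S. x ! i = v i}"

text \<open>MDS code with code distance rho: meets every (rho-1)-dimensional axis-aligned
  plane (d-rho+1 fixed coordinates) in exactly one point.\<close>
definition MDS_code :: "'a set \<Rightarrow> nat \<Rightarrow> nat \<Rightarrow> 'a list set \<Rightarrow> bool" where
  "MDS_code Q d rho C \<longleftrightarrow> C \<subseteq> cube Q d \<and>
     (\<forall>S v. S \<subseteq> {..<d} \<and> card S = d - rho + 1 \<and> (\<forall>i\<in>S. v i \<in> Q) \<longrightarrow>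
        card (C \<inter> axis_plane Q d S v) = 1)"

text \<open>Projection in direction i (0-indexed): delete the i-th coordinate.\<close>
definition proj :: "nat \<Rightarrow> 'a list set \<Rightarrow> 'a list set" where
  "proj i C = (\<lambda>x. take i x @ drop (Suc i) x) ` C"

end

theory Submission
  imports Defs
begin

lemma len5: assumes "length xs = 5" shows "xs = [xs!0,xs!1,xs!2,xs!3,xs!4]"
proof -
  have "length xs = Suc (Suc (Suc (Suc (Suc 0))))" using assms by simp
  then obtain a b c d e where "xs = [a,b,c,d,e]" by (auto simp only: length_Suc_conv length_0_conv)
  then show ?thesis by simp
qed

lemma Mmem: "MDS_code Q d r M \<Longrightarrow> m \<in> M \<Longrightarrow> length m = d \<and> set m \<subseteq> Q"
  unfolding MDS_code_def cube_def by auto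

lemma Qmem: "MDS_code Q 5 4 M \<Longrightarrow> m \<in> M \<Longrightarrow> k < 5 \<Longrightarrow> m!k \<in> Q"
  using Mmem[of Q 5 4 M m] nth_mem[of k m] by auto

lemma M_ex1:
  assumes M: "MDS_code Q 5 4 M" and "k<5" "l<5" "k\<noteq>l" "u\<in>Q" "w\<in>Q"
  shows "\<exists>!m. m\<in>M \<and> m!k=u \<and> m!l=w"
proof -
  define v where "v = (\<lambda>j. if j=k then u else w)"
  have c1: "card {k,l} = 5 - 4 + 1" using assms by simp
  have c2: "{k,l} \<subseteq> {..<5}" using assms by auto
  have c3: "\<forall>j\<in>{k,l}. v j \<in> Q" using assms by (auto simp: v_def)
  have A: "\<forall>S v. S \<subseteq> {..<5} \<and> card S = 5 - 4 + 1 \<and> (\<forall>i\<in>S. v i \<in> Q) \<longrightarrow>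
        card (M \<inter> axis_plane Q 5 S v) = 1"
    using M unfolding MDS_code_def by (rule conjunct2)
  have c: "card (M \<inter> axis_plane Q 5 {k,l} v) = 1"
    using A[rule_format, OF conjI[OF c2 conjI[OF c1 c3]]] .
  have eq: "M \<inter> axis_plane Q 5 {k,l} v = {m. m\<in>M \<and> m!k=u \<and> m!l=w}"
  proof -
    have Mc: "M \<subseteq> cube Q 5" using M unfolding MDS_code_def by (rule conjunct1)
    have vk1: "v k = u" unfolding v_def by simp
    have vk2: "v l = w" unfolding v_def using not_sym[OF assms(4)] by simp
    show ?thesis
    proof (intro set_eqI iffI)
      fix m assume "m \<in> M \<inter> axis_plane Q 5 {k,l} v"
      then show "m \<in> {m. m\<in>M \<and> m!k=u \<and> m!l=w}" unfolding axis_plane_def using vk1 vk2 by simp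
    next
      fix m assume "m \<in> {m. m\<in>M \<and> m!k=u \<and> m!l=w}"
      then show "m \<in> M \<inter> axis_plane Q 5 {k,l} v" unfolding axis_plane_def using vk1 vk2 Mc by auto
    qed
  qed
  from c[unfolded eq] obtain x where x: "{m. m\<in>M \<and> m!k=u \<and> m!l=w} = {x}"
    by (rule card_1_singletonE)
  have "\<And>m. (m\<in>M \<and> m!k=u \<and> m!l=w) \<longleftrightarrow> m = x"
    using x unfolding set_eq_iff mem_Collect_eq singleton_iff by (rule spec)
  then show ?thesis by (simp only:) simp
qed

lemma U: "MDS_code Q 5 4 M \<Longrightarrow> m\<in>M \<Longrightarrow> m'\<in>M \<Longrightarrow> k<5 \<Longrightarrow> l<5 \<Longrightarrow> k\<noteq>l
   \<Longrightarrow> m!k=m'!k \<Longrightarrow> m!l=m'!l \<Longrightarrow> m=m'"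
proof -
  assume a: "MDS_code Q 5 4 M" "m\<in>M" "m'\<in>M" "k<5" "l<5" "k\<noteq>l" "m!k=m'!k" "m!l=m'!l"
  have "\<exists>!x. x\<in>M \<and> x!k=m!k \<and> x!l=m!l"
    by (rule M_ex1[OF a(1,4,5,6)]) (use Qmem[OF a(1,2)] a(4,5) in auto)
  then obtain x where "x\<in>M \<and> x!k=m!k \<and> x!l=m!l" and uq: "\<forall>y. y\<in>M \<and> y!k=m!k \<and> y!l=m!l \<longrightarrow> y = x"
    by (rule ex1E)
  have "m = x" using uq[rule_format, of m] a(2) by simp
  moreover have "m' = x" using uq[rule_format, of m'] a(3,7,8) by simp
  ultimately show "m = m'" by simp
qed

lemma E: "MDS_code Q 5 4 M \<Longrightarrow> k<5 \<Longrightarrow> l<5 \<Longrightarrow> k\<noteq>l \<Longrightarrow> u\<in>Q \<Longrightarrow> w\<in>Q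
   \<Longrightarrow> \<exists>m\<in>M. m!k=u \<and> m!l=w"
  using ex1_implies_ex[OF M_ex1[of Q M k l u w]] by (simp add: Bex_def)

lemma card_ex1: "\<exists>!x. P x \<Longrightarrow> card {x. P x} = 1"
proof -
  assume "\<exists>!x. P x"
  then obtain x where "P x" "\<forall>y. P y \<longrightarrow> y = x" by (rule ex1E)
  then have "{x. P x} = {x}" by blast
  then show ?thesis by simp
qed

lemma key:
  assumes M: "MDS_code Q 5 4 M"
  and d: "distinct [j1,j2,j3,j4,i]" and r: "j1<5" "j2<5" "j3<5" "j4<5" "i<5"
  shows "MDS_code Q 4 2 {[a!j1,a!j2,b!j3,b!j4] | a b. a\<in>M \<and> b\<in>M \<and> a!i = b!i}"
    (is "MDS_code Q 4 2 ?C")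
proof -
  have sub: "?C \<subseteq> cube Q 4"
    using Qmem[OF M] r by (auto simp: cube_def)
  have dd: "j1\<noteq>j2" "j1\<noteq>j3" "j1\<noteq>j4" "j1\<noteq>i" "j2\<noteq>j3" "j2\<noteq>j4" "j2\<noteq>i" "j3\<noteq>j4" "j3\<noteq>i" "j4\<noteq>i" using d by auto
  have c3: "\<exists>!x. x\<in>?C \<and> x!0=u0 \<and> x!1=u1 \<and> x!2=u2" if q: "u0\<in>Q" "u1\<in>Q" "u2\<in>Q" for u0 u1 u2
  proof -
    obtain a where a: "a\<in>M" "a!j1=u0" "a!j2=u1"
      using E[OF M r(1) r(2) dd(1) q(1) q(2)] by blast
    obtain b where b: "b\<in>M" "b!j3=u2" "b!i=a!i"
      using E[OF M r(3) r(5) dd(9) q(3) Qmem[OF M a(1) r(5)]] by blast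
    show ?thesis
    proof (rule ex1I[of _ "[a!j1,a!j2,b!j3,b!j4]"])
      show "[a!j1,a!j2,b!j3,b!j4] \<in> ?C \<and> [a!j1,a!j2,b!j3,b!j4]!0=u0 \<and> [a!j1,a!j2,b!j3,b!j4]!1=u1 \<and> [a!j1,a!j2,b!j3,b!j4]!2=u2"
        using a b by (simp only: nth_Cons_0 nth_Cons_Suc numeral_nat One_nat_def mem_Collect_eq) metis
    next
      fix x assume hx: "x\<in>?C \<and> x!0=u0 \<and> x!1=u1 \<and> x!2=u2"
      then obtain a' b' where x: "x = [a'!j1,a'!j2,b'!j3,b'!j4]" "a'\<in>M" "b'\<in>M" "a'!i=b'!i"
        by blast
      have h: "a'!j1=u0" "a'!j2=u1" "b'!j3=u2" using hx x(1) by simp_all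
      have e1: "a' = a" using U[OF M x(2) a(1) r(1) r(2) dd(1)] h a by simp
      have "b'!i = b!i" by (metis x(4) b(3) e1)
      then have e2: "b' = b" using U[OF M x(3) b(1) r(3) r(5) dd(9)] h b by simp
      show "x = [a!j1,a!j2,b!j3,b!j4]" using x(1) e1 e2 by simp
    qed
  qed
  have c2: "\<exists>!x. x\<in>?C \<and> x!0=u0 \<and> x!1=u1 \<and> x!3=u2" if q: "u0\<in>Q" "u1\<in>Q" "u2\<in>Q" for u0 u1 u2
  proof -
    obtain a where a: "a\<in>M" "a!j1=u0" "a!j2=u1"
      using E[OF M r(1) r(2) dd(1) q(1) q(2)] by blast
    obtain b where b: "b\<in>M" "b!j4=u2" "b!i=a!i"
      using E[OF M r(4) r(5) dd(10) q(3) Qmem[OF M a(1) r(5)]] by blast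
    show ?thesis
    proof (rule ex1I[of _ "[a!j1,a!j2,b!j3,b!j4]"])
      show "[a!j1,a!j2,b!j3,b!j4] \<in> ?C \<and> [a!j1,a!j2,b!j3,b!j4]!0=u0 \<and> [a!j1,a!j2,b!j3,b!j4]!1=u1 \<and> [a!j1,a!j2,b!j3,b!j4]!3=u2"
        using a b by (simp only: nth_Cons_0 nth_Cons_Suc numeral_nat One_nat_def mem_Collect_eq) metis
    next
      fix x assume hx: "x\<in>?C \<and> x!0=u0 \<and> x!1=u1 \<and> x!3=u2"
      then obtain a' b' where x: "x = [a'!j1,a'!j2,b'!j3,b'!j4]" "a'\<in>M" "b'\<in>M" "a'!i=b'!i"
        by blast
      have h: "a'!j1=u0" "a'!j2=u1" "b'!j4=u2" using hx x(1) by simp_all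
      have e1: "a' = a" using U[OF M x(2) a(1) r(1) r(2) dd(1)] h a by simp
      have "b'!i = b!i" by (metis x(4) b(3) e1)
      then have e2: "b' = b" using U[OF M x(3) b(1) r(4) r(5) dd(10)] h b by simp
      show "x = [a!j1,a!j2,b!j3,b!j4]" using x(1) e1 e2 by simp
    qed
  qed
  have c1: "\<exists>!x. x\<in>?C \<and> x!0=u0 \<and> x!2=u1 \<and> x!3=u2" if q: "u0\<in>Q" "u1\<in>Q" "u2\<in>Q" for u0 u1 u2
  proof -
    obtain b where b: "b\<in>M" "b!j3=u1" "b!j4=u2"
      using E[OF M r(3) r(4) dd(8) q(2) q(3)] by blast
    obtain a where a: "a\<in>M" "a!j1=u0" "a!i=b!i"
      using E[OF M r(1) r(5) dd(4) q(1) Qmem[OF M b(1) r(5)]] by blast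
    show ?thesis
    proof (rule ex1I[of _ "[a!j1,a!j2,b!j3,b!j4]"])
      show "[a!j1,a!j2,b!j3,b!j4] \<in> ?C \<and> [a!j1,a!j2,b!j3,b!j4]!0=u0 \<and> [a!j1,a!j2,b!j3,b!j4]!2=u1 \<and> [a!j1,a!j2,b!j3,b!j4]!3=u2"
        using a b by (simp only: nth_Cons_0 nth_Cons_Suc numeral_nat One_nat_def mem_Collect_eq) metis
    next
      fix x assume hx: "x\<in>?C \<and> x!0=u0 \<and> x!2=u1 \<and> x!3=u2"
      then obtain a' b' where x: "x = [a'!j1,a'!j2,b'!j3,b'!j4]" "a'\<in>M" "b'\<in>M" "a'!i=b'!i"
        by blast
      have h: "a'!j1=u0" "b'!j3=u1" "b'!j4=u2" using hx x(1) by simp_all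
      have e1: "b' = b" using U[OF M x(3) b(1) r(3) r(4) dd(8)] h b by simp
      have "a'!i = a!i" by (metis x(4) a(3) e1)
      then have e2: "a' = a" using U[OF M x(2) a(1) r(1) r(5) dd(4)] h a by simp
      show "x = [a!j1,a!j2,b!j3,b!j4]" using x(1) e1 e2 by simp
    qed
  qed
  have c0: "\<exists>!x. x\<in>?C \<and> x!1=u0 \<and> x!2=u1 \<and> x!3=u2" if q: "u0\<in>Q" "u1\<in>Q" "u2\<in>Q" for u0 u1 u2
  proof -
    obtain b where b: "b\<in>M" "b!j3=u1" "b!j4=u2"
      using E[OF M r(3) r(4) dd(8) q(2) q(3)] by blast
    obtain a where a: "a\<in>M" "a!j2=u0" "a!i=b!i"
      using E[OF M r(2) r(5) dd(7) q(1) Qmem[OF M b(1) r(5)]] by blast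
    show ?thesis
    proof (rule ex1I[of _ "[a!j1,a!j2,b!j3,b!j4]"])
      show "[a!j1,a!j2,b!j3,b!j4] \<in> ?C \<and> [a!j1,a!j2,b!j3,b!j4]!1=u0 \<and> [a!j1,a!j2,b!j3,b!j4]!2=u1 \<and> [a!j1,a!j2,b!j3,b!j4]!3=u2"
        using a b by (simp only: nth_Cons_0 nth_Cons_Suc numeral_nat One_nat_def mem_Collect_eq) metis
    next
      fix x assume hx: "x\<in>?C \<and> x!1=u0 \<and> x!2=u1 \<and> x!3=u2"
      then obtain a' b' where x: "x = [a'!j1,a'!j2,b'!j3,b'!j4]" "a'\<in>M" "b'\<in>M" "a'!i=b'!i"
        by blast
      have h: "a'!j2=u0" "b'!j3=u1" "b'!j4=u2" using hx x(1) by simp_all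
      have e1: "b' = b" using U[OF M x(3) b(1) r(3) r(4) dd(8)] h b by simp
      have "a'!i = a!i" by (metis x(4) a(3) e1)
      then have e2: "a' = a" using U[OF M x(2) a(1) r(2) r(5) dd(7)] h a by simp
      show "x = [a!j1,a!j2,b!j3,b!j4]" using x(1) e1 e2 by simp
    qed
  qed
  show ?thesis unfolding MDS_code_def
  proof (intro conjI sub allI impI)
    fix S :: "nat set" and v assume H: "S \<subseteq> {..<4} \<and> card S = 4-2+1 \<and> (\<forall>i\<in>S. v i \<in> Q)"
    have f4: "{..<4::nat} = {0,1,2,3}" by auto
    obtain t :: nat where t: "t < 4" "t \<notin> S"
    proof (rule ccontr)
      assume "\<not> thesis"
      then have "S = {..<4}" using H that by auto
      then show False using H by simp
    qed
    have "S = {..<4} - {t}"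
      by (rule card_subset_eq) (use H t in auto)
    then have Sc: "S = {1,2,3} \<or> S = {0,2,3} \<or> S = {0,1,3} \<or> S = {0,1,2}"
      using t(1) unfolding f4 by (auto simp: less_Suc_eq numeral_eq_Suc)
    have eq: "?C \<inter> axis_plane Q 4 S v = {x. x\<in>?C \<and> (\<forall>j\<in>S. x!j = v j)}"
      using sub by (auto simp: axis_plane_def)
    have "card {x. x\<in>?C \<and> (\<forall>j\<in>S. x!j = v j)} = 1"
      using Sc
    proof (elim disjE)
      assume SS: "S = {1,2,3}"
      have "{x. x\<in>?C \<and> (\<forall>j\<in>S. x!j = v j)} = {x. x\<in>?C \<and> x!1 = v 1 \<and> x!2 = v 2 \<and> x!3 = v 3}"
        by (intro Collect_cong conj_cong refl) (simp add: SS)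
      moreover have "card {x. x\<in>?C \<and> x!1 = v 1 \<and> x!2 = v 2 \<and> x!3 = v 3} = 1"
        by (rule card_ex1, rule c0) (use H SS in auto)
      ultimately show ?thesis by simp
    next
      assume SS: "S = {0,2,3}"
      have "{x. x\<in>?C \<and> (\<forall>j\<in>S. x!j = v j)} = {x. x\<in>?C \<and> x!0 = v 0 \<and> x!2 = v 2 \<and> x!3 = v 3}"
        by (intro Collect_cong conj_cong refl) (simp add: SS)
      moreover have "card {x. x\<in>?C \<and> x!0 = v 0 \<and> x!2 = v 2 \<and> x!3 = v 3} = 1"
        by (rule card_ex1, rule c1) (use H SS in auto)
      ultimately show ?thesis by simp
    next
      assume SS: "S = {0,1,3}"
      have "{x. x\<in>?C \<and> (\<forall>j\<in>S. x!j = v j)} = {x. x\<in>?C \<and> x!0 = v 0 \<and> x!1 = v 1 \<and> x!3 = v 3}"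
        by (intro Collect_cong conj_cong refl) (simp add: SS)
      moreover have "card {x. x\<in>?C \<and> x!0 = v 0 \<and> x!1 = v 1 \<and> x!3 = v 3} = 1"
        by (rule card_ex1, rule c2) (use H SS in auto)
      ultimately show ?thesis by simp
    next
      assume SS: "S = {0,1,2}"
      have "{x. x\<in>?C \<and> (\<forall>j\<in>S. x!j = v j)} = {x. x\<in>?C \<and> x!0 = v 0 \<and> x!1 = v 1 \<and> x!2 = v 2}"
        by (intro Collect_cong conj_cong refl) (simp add: SS)
      moreover have "card {x. x\<in>?C \<and> x!0 = v 0 \<and> x!1 = v 1 \<and> x!2 = v 2} = 1"
        by (rule card_ex1, rule c3) (use H SS in auto)
      ultimately show ?thesis by simp
    qed
    then show "card (?C \<inter> axis_plane Q 4 S v) = 1" unfolding eq .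
  qed
qed

theorem proposition4:
  fixes Q :: "'a set" and M :: "'a list set" and i :: nat
  assumes "finite Q"
    and "MDS_code Q 5 4 M"
    and "i < 5"
  shows "\<exists>C. MDS_code Q 4 2 C \<and> proj i M \<subseteq> C"
proof -
  have L: "m = [m!0,m!1,m!2,m!3,m!4]" if "m \<in> M" for m
    using len5 Mmem[OF assms(2) that] by blast
  have "i = 0 \<or> i = 1 \<or> i = 2 \<or> i = 3 \<or> i = 4" using assms(3) by auto
  then show ?thesis
  proof (elim disjE)
    assume i: "i = 0"
    define C where "C = {[a!1,a!2,b!3,b!4] | a b. a\<in>M \<and> b\<in>M \<and> a!0 = b!0}"
    have MC: "MDS_code Q 4 2 C" unfolding C_def by (rule key[OF assms(2)]) auto
    have "take 0 m @ drop (Suc 0) m \<in> C" if m: "m \<in> M" for m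
    proof -
      obtain x0 x1 x2 x3 x4 where mx: "m = [x0,x1,x2,x3,x4]" using L[OF m] by blast
      have "take 0 m @ drop (Suc 0) m = [m!1,m!2,m!3,m!4]" by (simp add: mx)
      then show ?thesis unfolding C_def using m by blast
    qed
    then have "proj i M \<subseteq> C" unfolding proj_def i by blast
    then show ?thesis using MC by blast
  next
    assume i: "i = 1"
    define C where "C = {[a!0,a!2,b!3,b!4] | a b. a\<in>M \<and> b\<in>M \<and> a!1 = b!1}"
    have MC: "MDS_code Q 4 2 C" unfolding C_def by (rule key[OF assms(2)]) auto
    have "take 1 m @ drop (Suc 1) m \<in> C" if m: "m \<in> M" for m
    proof -
      obtain x0 x1 x2 x3 x4 where mx: "m = [x0,x1,x2,x3,x4]" using L[OF m] by blast
      have "take 1 m @ drop (Suc 1) m = [m!0,m!2,m!3,m!4]" by (simp add: mx)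
      then show ?thesis unfolding C_def using m by blast
    qed
    then have "proj i M \<subseteq> C" unfolding proj_def i by blast
    then show ?thesis using MC by blast
  next
    assume i: "i = 2"
    define C where "C = {[a!0,a!1,b!3,b!4] | a b. a\<in>M \<and> b\<in>M \<and> a!2 = b!2}"
    have MC: "MDS_code Q 4 2 C" unfolding C_def by (rule key[OF assms(2)]) auto
    have "take 2 m @ drop (Suc 2) m \<in> C" if m: "m \<in> M" for m
    proof -
      obtain x0 x1 x2 x3 x4 where mx: "m = [x0,x1,x2,x3,x4]" using L[OF m] by blast
      have "take 2 m @ drop (Suc 2) m = [m!0,m!1,m!3,m!4]" by (simp add: mx)
      then show ?thesis unfolding C_def using m by blast
    qed
    then have "proj i M \<subseteq> C" unfolding proj_def i by blast
    then show ?thesis using MC by blast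
  next
    assume i: "i = 3"
    define C where "C = {[a!0,a!1,b!2,b!4] | a b. a\<in>M \<and> b\<in>M \<and> a!3 = b!3}"
    have MC: "MDS_code Q 4 2 C" unfolding C_def by (rule key[OF assms(2)]) auto
    have "take 3 m @ drop (Suc 3) m \<in> C" if m: "m \<in> M" for m
    proof -
      obtain x0 x1 x2 x3 x4 where mx: "m = [x0,x1,x2,x3,x4]" using L[OF m] by blast
      have "take 3 m @ drop (Suc 3) m = [m!0,m!1,m!2,m!4]" by (simp add: mx)
      then show ?thesis unfolding C_def using m by blast
    qed
    then have "proj i M \<subseteq> C" unfolding proj_def i by blast
    then show ?thesis using MC by blast
  next
    assume i: "i = 4"
    define C where "C = {[a!0,a!1,b!2,b!3] | a b. a\<in>M \<and> b\<in>M \<and> a!4 = b!4}"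
    have MC: "MDS_code Q 4 2 C" unfolding C_def by (rule key[OF assms(2)]) auto
    have "take 4 m @ drop (Suc 4) m \<in> C" if m: "m \<in> M" for m
    proof -
      obtain x0 x1 x2 x3 x4 where mx: "m = [x0,x1,x2,x3,x4]" using L[OF m] by blast
      have "take 4 m @ drop (Suc 4) m = [m!0,m!1,m!2,m!3]" by (simp add: mx)
      then show ?thesis unfolding C_def using m by blast
    qed
    then have "proj i M \<subseteq> C" unfolding proj_def i by blast
    then show ?thesis using MC by blast
  qed
qed

end
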